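(* Let $E$ be a real Banach space, $K\subset E$ nonempty, closed and convex, and $g\in\mathcal F$ a totally convex function on $E$ satisfying H1–H2. If $T:K\to\mathcal P(K)$ is a multivalued mapping with nonempty, closed, convex values which is quasi $D_g$-nonexpansive, then $\mathrm{Fix}(T)$ is closed and convex.
   Context: $\mathcal F$ is the family of functions $g:E\to\mathbb R$ that are strictly convex, lower semicontinuous and Gâteaux differentiable, with derivative $g'$. $D_g(x,y)=g(x)-g(y)-\langle x-y,g'(y)\rangle$. $v_g(x,t)=\inf\{D_g(y,x):\|y-x\|=t\}$; $g$ is totally convex if $v_g(x,t)>0$ for all $x\in E$, $t>0$; uniformly totally convex on $E$ if $\inf_{x\in A}v_g(x,t)>0$ for every $t>0$ and bounded $A\subset E$. H1: the level sets of $D_g(x,\cdot)$ are bounded for all $x$; H2: $g$ is uniformly totally convex on $E$. For nonempty closed convex $D\subset E$, $\Pi^g_D(x)$ denotes the unique minimizer of $D_g(\cdot,x)$ over $D$ (Bregman projection). $\mathrm{Fix}(T)=\{x\in K: x\in T(x)\}$. $T$ is quasi $D_g$-nonexpansive if $S(x):=\Pi^g_{T(x)}(x)$ satisfies $\mathrm{Fix}(S)\ne\emptyset$ and $D_g(p,S(x))\le D_g(p,x)$ for all $p\in\mathrm{Fix}(S)$, $x\in K$. *)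

theory Defs
  imports "HOL-Analysis.Analysis"
begin

definition strictly_convex :: "('a::real_vector \<Rightarrow> real) \<Rightarrow> bool" where
  "strictly_convex g \<longleftrightarrow>
     (\<forall>x y t. x \<noteq> y \<and> 0 < t \<and> t < 1 \<longrightarrow>
        g ((1 - t) *\<^sub>R x + t *\<^sub>R y) < (1 - t) * g x + t * g y)"

definition lower_semicont :: "('a::topological_space \<Rightarrow> real) \<Rightarrow> bool" where
  "lower_semicont g \<longleftrightarrow> (\<forall>x c. c < g x \<longrightarrow> (\<forall>\<^sub>F y in nhds x. c < g y))"

definition has_gateaux_derivative :: "('a::real_normed_vector \<Rightarrow> real) \<Rightarrow> ('a \<Rightarrow> real) \<Rightarrow> 'a \<Rightarrow> bool" where
  "has_gateaux_derivative g L x \<longleftrightarrow> bounded_linear L \<and>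
     (\<forall>h. ((\<lambda>t. (g (x + t *\<^sub>R h) - g x) / t) \<longlongrightarrow> L h) (at 0))"

definition in_F :: "('a::real_normed_vector \<Rightarrow> real) \<Rightarrow> ('a \<Rightarrow> 'a \<Rightarrow> real) \<Rightarrow> bool" where
  "in_F g g' \<longleftrightarrow> strictly_convex g \<and> lower_semicont g \<and> (\<forall>x. has_gateaux_derivative g (g' x) x)"

definition bregman :: "('a::real_vector \<Rightarrow> real) \<Rightarrow> ('a \<Rightarrow> 'a \<Rightarrow> real) \<Rightarrow> 'a \<Rightarrow> 'a \<Rightarrow> real" where
  "bregman g g' x y = g x - g y - g' y (x - y)"

definition modulus_tc :: "('a::real_normed_vector \<Rightarrow> real) \<Rightarrow> ('a \<Rightarrow> 'a \<Rightarrow> real) \<Rightarrow> 'a \<Rightarrow> real \<Rightarrow> real" where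
  "modulus_tc g g' x t = Inf {bregman g g' y x | y. norm (y - x) = t}"

definition totally_convex :: "('a::real_normed_vector \<Rightarrow> real) \<Rightarrow> ('a \<Rightarrow> 'a \<Rightarrow> real) \<Rightarrow> bool" where
  "totally_convex g g' \<longleftrightarrow> (\<forall>x t. 0 < t \<longrightarrow> modulus_tc g g' x t > 0)"

(* inf over empty A is +infinity > 0, so only nonempty A impose a condition *)
definition uniformly_totally_convex :: "('a::real_normed_vector \<Rightarrow> real) \<Rightarrow> ('a \<Rightarrow> 'a \<Rightarrow> real) \<Rightarrow> bool" where
  "uniformly_totally_convex g g' \<longleftrightarrow>
     (\<forall>t A. 0 < t \<and> bounded A \<and> A \<noteq> {} \<longrightarrow> (INF x\<in>A. modulus_tc g g' x t) > 0)"

definition H1 :: "('a::real_normed_vector \<Rightarrow> real) \<Rightarrow> ('a \<Rightarrow> 'a \<Rightarrow> real) \<Rightarrow> bool" where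
  "H1 g g' \<longleftrightarrow> (\<forall>x r. bounded {y. bregman g g' x y \<le> r})"

definition H2 :: "('a::real_normed_vector \<Rightarrow> real) \<Rightarrow> ('a \<Rightarrow> 'a \<Rightarrow> real) \<Rightarrow> bool" where
  "H2 g g' \<longleftrightarrow> uniformly_totally_convex g g'"

definition bregman_proj :: "('a::real_vector \<Rightarrow> real) \<Rightarrow> ('a \<Rightarrow> 'a \<Rightarrow> real) \<Rightarrow> 'a set \<Rightarrow> 'a \<Rightarrow> 'a" where
  "bregman_proj g g' D x = (THE y. y \<in> D \<and> (\<forall>z\<in>D. bregman g g' y x \<le> bregman g g' z x))"

definition Fix_mv :: "'a set \<Rightarrow> ('a \<Rightarrow> 'a set) \<Rightarrow> 'a set" where
  "Fix_mv K T = {x\<in>K. x \<in> T x}"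

definition Fix_sv :: "'a set \<Rightarrow> ('a \<Rightarrow> 'a) \<Rightarrow> 'a set" where
  "Fix_sv K S = {x\<in>K. S x = x}"

definition quasi_Dg_nonexpansive ::
  "('a::real_vector \<Rightarrow> real) \<Rightarrow> ('a \<Rightarrow> 'a \<Rightarrow> real) \<Rightarrow> 'a set \<Rightarrow> ('a \<Rightarrow> 'a set) \<Rightarrow> bool" where
  "quasi_Dg_nonexpansive g g' K T \<longleftrightarrow>
     (let S = (\<lambda>x. bregman_proj g g' (T x) x) in
        Fix_sv K S \<noteq> {} \<and>
        (\<forall>p\<in>Fix_sv K S. \<forall>x\<in>K. bregman g g' p (S x) \<le> bregman g g' p x))"

end

theory Submission
  imports Defs
begin

lemma inF_lin: assumes "in_F g g'" shows "linear (g' x)"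
  using assms unfolding in_F_def has_gateaux_derivative_def by (blast intro: bounded_linear.linear)

lemma inF_blin: assumes "in_F g g'" shows "bounded_linear (g' x)"
  using assms unfolding in_F_def has_gateaux_derivative_def by blast

lemma inF_convex:
  assumes "in_F g g'" "0 \<le> t" "t \<le> 1"
  shows "g ((1 - t) *\<^sub>R x + t *\<^sub>R y) \<le> (1 - t) * g x + t * g y"
proof -
  have sc: "strictly_convex g" using assms(1) unfolding in_F_def by blast
  show ?thesis
  proof (cases "x = y \<or> t = 0 \<or> t = 1")
    case True
    then show ?thesis
    proof (elim disjE)
      assume "x = y" thus ?thesis by (simp add: algebra_simps flip: scaleR_add_left)
    qed auto
  next
    case False
    then show ?thesis using sc assms unfolding strictly_convex_def
      by (intro less_imp_le) auto
  qed
qed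

lemma inF_strict:
  assumes "in_F g g'" "x \<noteq> y"
  shows "g ((1/2) *\<^sub>R x + (1/2) *\<^sub>R y) < (1/2) * g x + (1/2) * g y"
  using assms unfolding in_F_def strictly_convex_def
  by (metis (no_types) field_sum_of_halves diff_add_cancel divide_pos_pos zero_less_one zero_less_numeral
       one_add_one half_gt_zero_iff less_add_same_cancel1 add_diff_cancel_left')

lemma breg_nonneg_aux:
  assumes "in_F g g'"
  shows "g' x (y - x) \<le> g y - g x"
proof -
  let ?h = "y - x"
  have lim: "((\<lambda>t. (g (x + t *\<^sub>R ?h) - g x) / t) \<longlongrightarrow> g' x ?h) (at 0)"
    using assms unfolding in_F_def has_gateaux_derivative_def by blast
  hence lim2: "((\<lambda>t. (g (x + t *\<^sub>R ?h) - g x) / t) \<longlongrightarrow> g' x ?h) (at_right 0)"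
    by (rule tendsto_mono[OF at_within_le_at])
  have ev: "\<forall>\<^sub>F t in at_right (0::real). (g (x + t *\<^sub>R ?h) - g x) / t \<le> g y - g x"
    unfolding eventually_at_right[OF zero_less_one]
  proof (intro exI[of _ 1] conjI allI impI)
    fix t :: real assume t: "0 < t" "t < 1"
    have "x + t *\<^sub>R ?h = (1 - t) *\<^sub>R x + t *\<^sub>R y" by (simp add: algebra_simps)
    hence "g (x + t *\<^sub>R ?h) \<le> (1 - t) * g x + t * g y"
      using inF_convex[OF assms, of t x y] t by simp
    hence "g (x + t *\<^sub>R ?h) - g x \<le> t * (g y - g x)" by (simp add: algebra_simps)
    thus "(g (x + t *\<^sub>R ?h) - g x) / t \<le> g y - g x" using t by (simp add: divide_le_eq mult.commute)
  qed simp
  show ?thesis by (rule tendsto_upperbound[OF lim2 ev]) simp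
qed

lemma breg_nonneg: "in_F g g' \<Longrightarrow> bregman g g' y x \<ge> 0"
  using breg_nonneg_aux[of g g' x y] unfolding bregman_def by simp

lemma breg_self: "in_F g g' \<Longrightarrow> bregman g g' x x = 0"
  using inF_lin[of g g' x] unfolding bregman_def by (simp add: linear_0)

lemma breg_pos:
  assumes "in_F g g'" "y \<noteq> x"
  shows "bregman g g' y x > 0"
proof -
  let ?m = "(1/2) *\<^sub>R x + (1/2) *\<^sub>R y"
  have lin: "linear (g' x)" by (rule inF_lin[OF assms(1)])
  have "?m - x = (1/2) *\<^sub>R (y - x)"
  proof -
    have "x = (1/2) *\<^sub>R x + (1/2) *\<^sub>R x" by (simp flip: scaleR_add_left)
    hence "?m - x = (1/2) *\<^sub>R y - (1/2) *\<^sub>R x" by (metis add_diff_cancel_left add_diff_cancel_right)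
    thus ?thesis by (simp add: scaleR_diff_right)
  qed
  hence "g' x (?m - x) = (1/2) * g' x (y - x)" using linear_scale[OF lin] by simp
  moreover have "g' x (?m - x) \<le> g ?m - g x" by (rule breg_nonneg_aux[OF assms(1)])
  moreover have "g ?m < (1/2) * g x + (1/2) * g y" using inF_strict[OF assms(1)] assms(2) by auto
  ultimately have "g' x (y - x) < g y - g x" by linarith
  thus ?thesis unfolding bregman_def by simp
qed

lemma breg_convex1:
  assumes "in_F g g'" "0 \<le> t" "t \<le> 1"
  shows "bregman g g' ((1 - t) *\<^sub>R a + t *\<^sub>R b) z \<le> (1 - t) * bregman g g' a z + t * bregman g g' b z"
proof -
  have lin: "linear (g' z)" by (rule inF_lin[OF assms(1)])
  have e: "(1 - t) *\<^sub>R a + t *\<^sub>R b - z = (1 - t) *\<^sub>R (a - z) + t *\<^sub>R (b - z)" by (simp add: algebra_simps)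
  have "g' z ((1 - t) *\<^sub>R a + t *\<^sub>R b - z) = (1 - t) * g' z (a - z) + t * g' z (b - z)"
    unfolding e using linear_add[OF lin] linear_scale[OF lin] by simp
  moreover have "g ((1 - t) *\<^sub>R a + t *\<^sub>R b) \<le> (1 - t) * g a + t * g b" by (rule inF_convex[OF assms])
  ultimately show ?thesis unfolding bregman_def by (simp add: algebra_simps)
qed

lemma breg_scale:
  assumes "in_F g g'" "0 \<le> c" "c \<le> 1"
  shows "bregman g g' (z + c *\<^sub>R (y - z)) z \<le> c * bregman g g' y z"
proof -
  have "z + c *\<^sub>R (y - z) = (1 - c) *\<^sub>R z + c *\<^sub>R y" by (simp add: algebra_simps)
  thus ?thesis using breg_convex1[OF assms, of z y z] breg_self[OF assms(1), of z] by simp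
qed


lemma mod_le:
  assumes "in_F g g'" "0 < t" "t \<le> norm (a - z)"
  shows "modulus_tc g g' z t \<le> bregman g g' a z"
proof -
  define s where "s = norm (a - z)"
  have s: "0 < s" using assms s_def by linarith
  define c where "c = t / s"
  have c: "0 < c" "c \<le> 1" using assms s unfolding c_def s_def by auto
  define w where "w = z + c *\<^sub>R (a - z)"
  have nw: "norm (w - z) = t" unfolding w_def c_def s_def using s s_def assms(2) by simp
  have "modulus_tc g g' z t \<le> bregman g g' w z"
    unfolding modulus_tc_def
    by (rule cInf_lower) (use nw breg_nonneg[OF assms(1)] in \<open>auto simp: bdd_below_def\<close>)
  also have "\<dots> \<le> c * bregman g g' a z" unfolding w_def using breg_scale[OF assms(1)] c by simp
  also have "\<dots> \<le> bregman g g' a z" using c breg_nonneg[OF assms(1), of a z]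
    by (simp add: mult_left_le_one_le)
  finally show ?thesis .
qed

lemma mod_nonneg:
  fixes g :: "'a::real_normed_vector \<Rightarrow> real" and u :: 'a
  assumes "in_F g g'" "0 < t" "u \<noteq> 0"
  shows "0 \<le> modulus_tc g g' z t"
proof -
  have "norm ((z + (t / norm u) *\<^sub>R u) - z) = t" using assms by simp
  hence ne: "{bregman g g' y z | y. norm (y - z) = t} \<noteq> {}" by blast
  show ?thesis unfolding modulus_tc_def
    by (rule cInf_greatest[OF ne]) (use breg_nonneg[OF assms(1)] in auto)
qed


lemma mid_lin:
  assumes "in_F g g'"
  shows "g' x ((1/2) *\<^sub>R a + (1/2) *\<^sub>R b - x) = (1/2) * g' x (a - x) + (1/2) * g' x (b - x)"
proof -
  have lin: "linear (g' x)" by (rule inF_lin[OF assms])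
  have "(1/2) *\<^sub>R a + (1/2) *\<^sub>R b - x = (1/2) *\<^sub>R (a - x) + (1/2) *\<^sub>R (b - x)"
  proof -
    have "x = (1/2) *\<^sub>R x + (1/2) *\<^sub>R x" by (simp flip: scaleR_add_left)
    hence "(1/2) *\<^sub>R a + (1/2) *\<^sub>R b - x = (1/2) *\<^sub>R a + (1/2) *\<^sub>R b - ((1/2) *\<^sub>R x + (1/2) *\<^sub>R x)"
      by simp
    also have "\<dots> = (1/2) *\<^sub>R (a - x) + (1/2) *\<^sub>R (b - x)" by (simp add: algebra_simps)
    finally show ?thesis .
  qed
  thus ?thesis using linear_add[OF lin] linear_scale[OF lin] by simp
qed

lemma mid_lin2:
  assumes "in_F g g'"
  shows "g' z (a - ((1/2) *\<^sub>R a + (1/2) *\<^sub>R b)) + g' z (b - ((1/2) *\<^sub>R a + (1/2) *\<^sub>R b)) = 0"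
proof -
  have lin: "linear (g' z)" by (rule inF_lin[OF assms])
  have "(a - ((1/2) *\<^sub>R a + (1/2) *\<^sub>R b)) + (b - ((1/2) *\<^sub>R a + (1/2) *\<^sub>R b))
     = (a - ((1/2) *\<^sub>R a + (1/2) *\<^sub>R a)) + (b - ((1/2) *\<^sub>R b + (1/2) *\<^sub>R b))"
    by (simp add: algebra_simps)
  also have "\<dots> = 0" by (simp flip: scaleR_add_left)
  finally have "(a - ((1/2) *\<^sub>R a + (1/2) *\<^sub>R b)) + (b - ((1/2) *\<^sub>R a + (1/2) *\<^sub>R b)) = 0" .
  hence "g' z ((a - ((1/2) *\<^sub>R a + (1/2) *\<^sub>R b)) + (b - ((1/2) *\<^sub>R a + (1/2) *\<^sub>R b))) = 0"
    using linear_0[OF lin] by simp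
  thus ?thesis using linear_add[OF lin] by simp
qed


lemma proj_exists:
  fixes g :: "'a::banach \<Rightarrow> real"
  assumes F: "in_F g g'" and tc: "totally_convex g g'" and h2: "H2 g g'"
    and C: "closed C" "convex C" "C \<noteq> {}"
  shows "\<exists>!y. y \<in> C \<and> (\<forall>z\<in>C. bregman g g' y x \<le> bregman g g' z x)"
proof -
  define f where "f y = bregman g g' y x" for y
  have fnn: "0 \<le> f y" for y unfolding f_def by (rule breg_nonneg[OF F])
  define m where "m = Inf (f ` C)"
  have bdd: "bdd_below (f ` C)" using fnn by (auto simp: bdd_below_def)
  have mle: "m \<le> f z" if "z \<in> C" for z unfolding m_def by (rule cINF_lower[OF bdd that])
  have "\<exists>y\<in>C. f y < m + inverse (real (Suc n))" for n
    using cInf_lessD[of "f ` C" "m + inverse (real (Suc n))"] C(3) unfolding m_def by auto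
  then obtain ys where ys: "\<And>n. ys n \<in> C" "\<And>n. f (ys n) < m + inverse (real (Suc n))"
    by metis
  have m0: "0 \<le> m" using mle fnn C(3) by (metis all_not_in_conv cInf_greatest empty_is_image image_iff m_def)
  define c where "c = modulus_tc g g' x 1"
  have c: "0 < c" using tc unfolding totally_convex_def c_def by simp
  define R where "R = max 1 ((m + 1) / c)"
  have bnd: "norm (y - x) \<le> R" if fy: "f y \<le> m + 1" for y
  proof (cases "norm (y - x) \<le> 1")
    case True thus ?thesis unfolding R_def by simp
  next
    case False
    define s where "s = norm (y - x)"
    have s: "1 < s" using False s_def by simp
    define w where "w = x + (1 / s) *\<^sub>R (y - x)"
    have nw: "norm (w - x) = 1" unfolding w_def s_def using s s_def by (cases "y = x") auto
    have "c \<le> bregman g g' w x" unfolding c_def by (rule mod_le[OF F]) (use nw in auto)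
    also have "\<dots> \<le> (1 / s) * f y" unfolding w_def f_def by (rule breg_scale[OF F]) (use s in auto)
    finally have "c * s \<le> f y" using s by (simp add: field_simps)
    hence "c * s \<le> m + 1" using fy by simp
    hence "s \<le> (m + 1) / c" using c by (simp add: field_simps mult.commute)
    thus ?thesis unfolding R_def s_def by simp
  qed
  have fys1: "f (ys n) \<le> m + 1" for n
  proof -
    have "inverse (real (Suc n)) \<le> 1" by (simp add: inverse_le_1_iff)
    thus ?thesis using ys(2)[of n] by linarith
  qed
  have R0: "0 < R" unfolding R_def by simp
  have "Cauchy ys"
    unfolding Cauchy_def
  proof (intro allI impI)
    fix e :: real assume e: "0 < e"
    define A where "A = cball x R"
    define \<delta> where "\<delta> = (INF z\<in>A. modulus_tc g g' z (e/2))"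
    have \<delta>: "0 < \<delta>" using h2 e R0 unfolding H2_def uniformly_totally_convex_def \<delta>_def A_def
      by (metis bounded_cball cball_eq_empty half_gt_zero not_le less_imp_le)
    obtain N where N: "inverse (real (Suc N)) < \<delta>" using reals_Archimedean[OF \<delta>] by blast
    have small: "f (ys n) < m + \<delta>" if "n \<ge> N" for n
    proof -
      have "inverse (real (Suc n)) \<le> inverse (real (Suc N))" using that by (simp add: le_imp_inverse_le)
      thus ?thesis using ys(2)[of n] N by linarith
    qed
    show "\<exists>M. \<forall>p\<ge>M. \<forall>q\<ge>M. dist (ys p) (ys q) < e"
    proof (intro exI allI impI)
      fix p q assume p: "N \<le> p" and q: "N \<le> q"
      define a where "a = ys p"
      define b where "b = ys q"
      show "dist (ys p) (ys q) < e"
      proof (rule ccontr)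
        assume "\<not> dist (ys p) (ys q) < e"
        hence eab: "e \<le> norm (a - b)" unfolding a_def b_def dist_norm by simp
        define z where "z = (1/2) *\<^sub>R a + (1/2) *\<^sub>R b"
        have zC: "z \<in> C" unfolding z_def a_def b_def by (rule convexD[OF C(2) ys(1) ys(1)]) auto
        have na: "norm (a - x) \<le> R" unfolding a_def by (rule bnd[OF fys1])
        have nb: "norm (b - x) \<le> R" unfolding b_def by (rule bnd[OF fys1])
        have "z - x = (1/2) *\<^sub>R (a - x) + (1/2) *\<^sub>R (b - x)"
        proof -
          have "x = (1/2) *\<^sub>R x + (1/2) *\<^sub>R x" by (simp flip: scaleR_add_left)
          hence "z - x = (1/2) *\<^sub>R a + (1/2) *\<^sub>R b - ((1/2) *\<^sub>R x + (1/2) *\<^sub>R x)"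
            unfolding z_def by simp
          also have "\<dots> = (1/2) *\<^sub>R (a - x) + (1/2) *\<^sub>R (b - x)" by (simp add: algebra_simps)
          finally show ?thesis .
        qed
        hence "norm (z - x) \<le> (1/2) * norm (a - x) + (1/2) * norm (b - x)"
          by (metis norm_triangle_ineq norm_scaleR abs_of_nonneg zero_le_divide_1_iff zero_le_numeral)
        hence zA: "z \<in> A" unfolding A_def mem_cball dist_norm using na nb
          by (simp add: norm_minus_commute)
        have az: "a - z = (1/2) *\<^sub>R (a - b)"
        proof -
          have "(1/2) *\<^sub>R (a - b) = ((1/2) *\<^sub>R a + (1/2) *\<^sub>R a) - ((1/2) *\<^sub>R a + (1/2) *\<^sub>R b)"
            by (simp add: algebra_simps)
          also have "\<dots> = a - z" by (simp add: z_def flip: scaleR_add_left)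
          finally show ?thesis by simp
        qed
        have bz: "b - z = (1/2) *\<^sub>R (b - a)"
        proof -
          have "(1/2) *\<^sub>R (b - a) = ((1/2) *\<^sub>R b + (1/2) *\<^sub>R b) - ((1/2) *\<^sub>R a + (1/2) *\<^sub>R b)"
            by (simp add: algebra_simps)
          also have "\<dots> = b - z" by (simp add: z_def flip: scaleR_add_left)
          finally show ?thesis by simp
        qed
        have nab: "e/2 \<le> norm (a - z)" "e/2 \<le> norm (b - z)" using eab unfolding az bz
          by (simp_all add: norm_minus_commute)
        have ab0: "a - b \<noteq> 0" using eab e by auto
        have bddm: "bdd_below ((\<lambda>z. modulus_tc g g' z (e/2)) ` A)"
          using mod_nonneg[OF F _ ab0] e unfolding bdd_below_def by (intro exI[of _ 0]) auto
        have "\<delta> \<le> modulus_tc g g' z (e/2)" unfolding \<delta>_def by (rule cINF_lower[OF bddm zA])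
        hence da: "\<delta> \<le> bregman g g' a z" and db: "\<delta> \<le> bregman g g' b z"
          using mod_le[OF F _ nab(1)] mod_le[OF F _ nab(2)] e by force+
        have ident: "f a + f b - 2 * f z = bregman g g' a z + bregman g g' b z"
          using mid_lin[OF F, of x a b] mid_lin2[OF F, of z a b]
          unfolding f_def bregman_def z_def by (simp add: algebra_simps)
        have "f a + f b \<ge> 2 * m + 2 * \<delta>" using ident da db mle[OF zC] by linarith
        moreover have "f a < m + \<delta>" "f b < m + \<delta>" unfolding a_def b_def using small p q by auto
        ultimately show False by linarith
      qed
    qed
  qed
  then obtain y where ylim: "ys \<longlonglongrightarrow> y" using Cauchy_convergent_iff convergent_def by blast
  have yC: "y \<in> C" by (rule closed_sequentially[OF C(1) ys(1) ylim])
  have flim: "(\<lambda>n. f (ys n)) \<longlonglongrightarrow> m"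
  proof (rule tendsto_sandwich[of "\<lambda>n. m" _ _ "\<lambda>n. m + inverse (real (Suc n))"])
    show "\<forall>\<^sub>F n in sequentially. m \<le> f (ys n)" using mle ys(1) by simp
    show "\<forall>\<^sub>F n in sequentially. f (ys n) \<le> m + inverse (real (Suc n))" using ys(2) by (simp add: less_imp_le)
    show "((\<lambda>n. m + inverse (real (Suc n))) \<longlongrightarrow> m) sequentially"
      using tendsto_add[OF tendsto_const LIMSEQ_inverse_real_of_nat, of m] by simp
  qed simp
  define L where "L u = g x + g' x (u - x)" for u
  have fL: "f u = g u - L u" for u unfolding f_def L_def bregman_def by simp
  have Llim: "(\<lambda>n. L (ys n)) \<longlonglongrightarrow> L y"
    unfolding L_def
    by (intro tendsto_add tendsto_const bounded_linear.tendsto[OF inF_blin[OF F]] tendsto_diff ylim)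
  have glim: "(\<lambda>n. g (ys n)) \<longlonglongrightarrow> m + L y"
    using tendsto_add[OF flim Llim] by (simp add: fL)
  have lsc: "lower_semicont g" using F unfolding in_F_def by blast
  have cle: "c' \<le> m + L y" if "c' < g y" for c'
  proof -
    have "\<forall>\<^sub>F u in nhds y. c' < g u" using lsc that unfolding lower_semicont_def by blast
    hence "\<forall>\<^sub>F n in sequentially. c' < g (ys n)" using ylim unfolding filterlim_iff by blast
    hence "\<forall>\<^sub>F n in sequentially. c' \<le> g (ys n)" by (auto elim: eventually_mono)
    thus ?thesis by (rule tendsto_lowerbound[OF glim]) simp
  qed
  have "g y \<le> m + L y"
  proof (rule ccontr)
    assume "\<not> g y \<le> m + L y"
    hence "(g y + (m + L y)) / 2 < g y" by simp
    from cle[OF this] \<open>\<not> g y \<le> m + L y\<close> show False by simp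
  qed
  hence fy: "f y \<le> m" using fL by simp
  show ?thesis
  proof (rule ex_ex1I)
    show "\<exists>y. y \<in> C \<and> (\<forall>z\<in>C. bregman g g' y x \<le> bregman g g' z x)"
      using yC fy mle unfolding f_def by (meson order_trans)
  next
    fix y1 y2
    assume 1: "y1 \<in> C \<and> (\<forall>z\<in>C. bregman g g' y1 x \<le> bregman g g' z x)"
       and 2: "y2 \<in> C \<and> (\<forall>z\<in>C. bregman g g' y2 x \<le> bregman g g' z x)"
    show "y1 = y2"
    proof (rule ccontr)
      assume ne: "y1 \<noteq> y2"
      define z where "z = (1/2) *\<^sub>R y1 + (1/2) *\<^sub>R y2"
      have zC: "z \<in> C" unfolding z_def using 1 2 by (intro convexD[OF C(2)]) auto
      have "g z < (1/2) * g y1 + (1/2) * g y2" unfolding z_def by (rule inF_strict[OF F ne])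
      hence "f z < (1/2) * f y1 + (1/2) * f y2"
        using mid_lin[OF F, of x y1 y2] unfolding f_def bregman_def z_def by (simp add: field_simps)
      moreover have "f y1 \<le> f z" "f y2 \<le> f z" using 1 2 zC unfolding f_def by auto
      ultimately show False by linarith
    qed
  qed
qed


lemma breg_comb:
  assumes F: "in_F g g'" and uv: "u + v = 1"
  shows "u * bregman g g' p1 q + v * bregman g g' p2 q
       = bregman g g' (u *\<^sub>R p1 + v *\<^sub>R p2) q + (u * g p1 + v * g p2 - g (u *\<^sub>R p1 + v *\<^sub>R p2))"
proof -
  have lin: "linear (g' q)" by (rule inF_lin[OF F])
  have "u *\<^sub>R (p1 - q) + v *\<^sub>R (p2 - q) = u *\<^sub>R p1 + v *\<^sub>R p2 - (u + v) *\<^sub>R q"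
    by (simp add: algebra_simps)
  hence e: "u *\<^sub>R (p1 - q) + v *\<^sub>R (p2 - q) = u *\<^sub>R p1 + v *\<^sub>R p2 - q" using uv by simp
  have "g' q (u *\<^sub>R p1 + v *\<^sub>R p2 - q) = u * g' q (p1 - q) + v * g' q (p2 - q)"
    unfolding e[symmetric] using linear_add[OF lin] linear_scale[OF lin] by simp
  thus ?thesis unfolding bregman_def using uv by (simp add: algebra_simps)
       (metis add.commute add_diff_cancel_left' distrib_right mult_1 uv)
qed

theorem proposition2p10:
  fixes g :: "'a::banach \<Rightarrow> real" and g' :: "'a \<Rightarrow> 'a \<Rightarrow> real"
    and K :: "'a set" and T :: "'a \<Rightarrow> 'a set"
  assumes "K \<noteq> {}" and "closed K" and "convex K"
    and "in_F g g'" and "totally_convex g g'" and "H1 g g'" and "H2 g g'"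
    and "\<forall>x\<in>K. T x \<subseteq> K \<and> T x \<noteq> {} \<and> closed (T x) \<and> convex (T x)"
    and "quasi_Dg_nonexpansive g g' K T"
  shows "closed (Fix_mv K T) \<and> convex (Fix_mv K T)"
proof -
  note F = assms(4)
  define S where "S x = bregman_proj g g' (T x) x" for x
  have proj: "S x \<in> T x \<and> (\<forall>z\<in>T x. bregman g g' (S x) x \<le> bregman g g' z x)" if "x \<in> K" for x
    unfolding S_def bregman_proj_def
    by (rule theI'[OF proj_exists[OF F assms(5) assms(7)]]) (use assms(8) that in auto)
  have qne: "\<And>p x. p \<in> Fix_sv K S \<Longrightarrow> x \<in> K \<Longrightarrow> bregman g g' p (S x) \<le> bregman g g' p x"
    using assms(9) unfolding quasi_Dg_nonexpansive_def Let_def S_def by blast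
  have eq0: "p = q" if "bregman g g' p q \<le> 0" for p q
    using breg_pos[OF F, of p q] that by (cases "p = q") auto
  have fixeq: "Fix_mv K T = Fix_sv K S"
  proof
    show "Fix_mv K T \<subseteq> Fix_sv K S"
    proof
      fix x assume "x \<in> Fix_mv K T"
      hence x: "x \<in> K" "x \<in> T x" unfolding Fix_mv_def by auto
      have "bregman g g' (S x) x \<le> bregman g g' x x" using proj[OF x(1)] x(2) by blast
      hence "S x = x" using eq0 breg_self[OF F, of x] by simp
      thus "x \<in> Fix_sv K S" using x unfolding Fix_sv_def by simp
    qed
  next
    show "Fix_sv K S \<subseteq> Fix_mv K T"
      using proj unfolding Fix_sv_def Fix_mv_def by force
  qed
  have cvx: "convex (Fix_sv K S)"
  proof (rule convexI)
    fix p1 p2 :: 'a and u v :: real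
    assume p1: "p1 \<in> Fix_sv K S" and p2: "p2 \<in> Fix_sv K S" and u: "0 \<le> u" and v: "0 \<le> v" and uv: "u + v = 1"
    define p where "p = u *\<^sub>R p1 + v *\<^sub>R p2"
    have pK: "p \<in> K" unfolding p_def using p1 p2 u v uv convexD[OF assms(3)] unfolding Fix_sv_def by blast
    define q where "q = S p"
    have "u * bregman g g' p1 q \<le> u * bregman g g' p1 p"
      unfolding q_def using qne[OF p1 pK] u by (rule mult_left_mono)
    moreover have "v * bregman g g' p2 q \<le> v * bregman g g' p2 p"
      unfolding q_def using qne[OF p2 pK] v by (rule mult_left_mono)
    ultimately have "bregman g g' p q \<le> bregman g g' p p"
      using breg_comb[OF F uv, of p1 q p2] breg_comb[OF F uv, of p1 p p2] unfolding p_def by linarith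
    hence "p = q" using eq0 breg_self[OF F, of p] by simp
    thus "u *\<^sub>R p1 + v *\<^sub>R p2 \<in> Fix_sv K S" using pK unfolding Fix_sv_def p_def q_def by simp
  qed
  have cl: "closed (Fix_sv K S)"
    unfolding closed_sequential_limits
  proof (intro allI impI, elim conjE)
    fix xs l assume xs: "\<forall>n. xs n \<in> Fix_sv K S" and lim: "xs \<longlonglongrightarrow> l"
    have lK: "l \<in> K" using closed_sequentially[OF assms(2) _ lim] xs unfolding Fix_sv_def by blast
    define q where "q = S l"
    define \<phi> where "\<phi> u = g l - g q - g' q (u - q) + g' l (u - l)" for u
    have phi: "\<phi> u = bregman g g' u q - bregman g g' u l" for u
      unfolding \<phi>_def bregman_def by simp
    have "\<phi> (xs n) \<le> 0" for n using qne[OF xs[rule_format, of n] lK] unfolding phi q_def by simp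
    moreover have "(\<lambda>n. \<phi> (xs n)) \<longlonglongrightarrow> \<phi> l"
      unfolding \<phi>_def
      by (intro tendsto_add tendsto_diff tendsto_const bounded_linear.tendsto[OF inF_blin[OF F]] lim)
    ultimately have "\<phi> l \<le> 0" by (intro tendsto_upperbound[of "\<lambda>n. \<phi> (xs n)"]) auto
    hence "bregman g g' l q \<le> 0" unfolding phi using breg_self[OF F, of l] by simp
    hence "l = q" by (rule eq0)
    thus "l \<in> Fix_sv K S" using lK unfolding Fix_sv_def q_def by simp
  qed
  show ?thesis using cl cvx fixeq by simp
qed

end
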